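(* Let $M$ be a finite message set, let $\Sigma$ be an ambiguous experiment with message set $M$, and let $\tau: M \to \Delta(A)$ be a receiver strategy with $\tau \in BR(\Sigma)$. For each $\sigma \in \Sigma$ define the canonical experiment $\sigma^{*}: \Omega \to \Delta(A)$ by $\sigma^{*}(a\mid\omega) = \sum_{m \in M} \sigma(m\mid\omega)\tau(a\mid m)$, and let $\Sigma^{*} = \{\sigma^{*} : \sigma \in \Sigma\}$. Then $\Sigma^{*}$ is a canonical ambiguous experiment (a nonempty closed convex set of canonical experiments), it is obedient, i.e. $\tau^{*} \in BR(\Sigma^{*})$, and $u_i(\sigma, \tau) = u_i(\sigma^{*}, \tau^{*})$ for all $i \in \{s, r\}$ and all $\sigma \in \Sigma$.
   Context: Setting: $\Omega$ is a finite set of states, $A$ a finite set of receiver actions. Sender and receiver share a set of priors $P \subseteq \Delta(\Omega)$, nonempty, closed and convex; both have maxmin expected utility preferences. Payoffs are $u_s, u_r : A \times \Omega \to \mathbb{R}$. A statistical experiment with finite message set $M$ is a map $\sigma: \Omega \to \Delta(M)$, written $\sigma(m\mid\omega)$. A receiver strategy is $\tau: M \to \Delta(A)$, written $\tau(a\mid m)$. For $p \in P$ and $i \in \{s,r\}$, $u_i(p,\sigma,\tau) = \sum_{\omega,m,a} p(\omega)\sigma(m\mid\omega)\tau(a\mid m)u_i(a,\omega)$ and $u_i(\sigma,\tau) = \min_{p\in P} u_i(p,\sigma,\tau)$. An ambiguous experiment is a nonempty closed convex set $\Sigma$ of statistical experiments with a common finite message set $M$; $U_i(\Sigma,\tau)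 = \min_{\sigma \in \Sigma} u_i(\sigma,\tau)$. Best responses: $BR(\sigma) = \arg\max_{\tau} u_r(\sigma,\tau)$ and $BR(\Sigma) = \arg\max_{\tau} U_r(\Sigma,\tau)$, maximizing over all strategies $\tau: M \to \Delta(A)$. An experiment is canonical if its message set is $M = A$. The obedient strategy $\tau^{*}: A \to \Delta(A)$ is $\tau^{*}(a\mid a) = 1$ for all $a \in A$. A canonical (ambiguous) experiment is obedient if $\tau^{*}$ is a best response to it. *)

theory Defs
  imports "HOL-Analysis.Analysis"
begin

text \<open>A statistical experiment is sigma :: real^'m^'w with sigma$w$m = sigma(m|w);
  a receiver strategy is tau :: real^'a^'m with tau$m$a = tau(a|m).\<close>

definition is_dist :: "real^'n \<Rightarrow> bool" where
  "is_dist p \<longleftrightarrow> (\<forall>i. 0 \<le> p $ i) \<and> (\<Sum>i\<in>UNIV. p $ i) = 1"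

definition stat_experiment :: "real^'m^'w \<Rightarrow> bool" where
  "stat_experiment \<sigma> \<longleftrightarrow> (\<forall>w. is_dist (\<sigma> $ w))"

definition strategy :: "real^'a^'m \<Rightarrow> bool" where
  "strategy \<tau> \<longleftrightarrow> (\<forall>m. is_dist (\<tau> $ m))"

definition prior_set :: "(real^'w) set \<Rightarrow> bool" where
  "prior_set P \<longleftrightarrow> P \<noteq> {} \<and> closed P \<and> convex P \<and> (\<forall>p\<in>P. is_dist p)"

definition ambiguous_experiment :: "(real^'m^'w) set \<Rightarrow> bool" where
  "ambiguous_experiment S \<longleftrightarrow> S \<noteq> {} \<and> closed S \<and> convex S \<and> (\<forall>\<sigma>\<in>S. stat_experiment \<sigma>)"

definition util_p :: "('a \<Rightarrow> 'w \<Rightarrow> real) \<Rightarrow> real^'w \<Rightarrow> real^'m^'w \<Rightarrow> real^'a^'m \<Rightarrow> real" where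
  "util_p u p \<sigma> \<tau> = (\<Sum>w\<in>UNIV. \<Sum>m\<in>UNIV. \<Sum>a\<in>UNIV. p $ w * \<sigma> $ w $ m * \<tau> $ m $ a * u a w)"

definition util :: "(real^'w) set \<Rightarrow> ('a \<Rightarrow> 'w \<Rightarrow> real) \<Rightarrow> real^'m^'w \<Rightarrow> real^'a^'m \<Rightarrow> real" where
  "util P u \<sigma> \<tau> = Inf ((\<lambda>p. util_p u p \<sigma> \<tau>) ` P)"

definition Util :: "(real^'w) set \<Rightarrow> ('a \<Rightarrow> 'w \<Rightarrow> real) \<Rightarrow> (real^'m^'w) set \<Rightarrow> real^'a^'m \<Rightarrow> real" where
  "Util P u S \<tau> = Inf ((\<lambda>\<sigma>. util P u \<sigma> \<tau>) ` S)"

definition BR_amb :: "(real^'w) set \<Rightarrow> ('a \<Rightarrow> 'w \<Rightarrow> real) \<Rightarrow> (real^'m^'w) set \<Rightarrow> (real^'a^'m) set" where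
  "BR_amb P ur S = {\<tau>. strategy \<tau> \<and> (\<forall>\<tau>'. strategy \<tau>' \<longrightarrow> Util P ur S \<tau>' \<le> Util P ur S \<tau>)}"

definition canon :: "real^'m^'w \<Rightarrow> real^'a^'m \<Rightarrow> real^'a^'w" where
  "canon \<sigma> \<tau> = (\<chi> w a. \<Sum>m\<in>UNIV. \<sigma> $ w $ m * \<tau> $ m $ a)"

definition obedient :: "real^'a^'a" where
  "obedient = (\<chi> m a. if a = m then 1 else 0)"

end

theory Submission
  imports Defs
begin

lemma norm_nested_le: "norm (x::real^'m::finite^'w::finite) \<le> (\<Sum>w\<in>UNIV. \<Sum>m\<in>UNIV. \<bar>x$w$m\<bar>)"
proof -
  have "norm x \<le> (\<Sum>w\<in>UNIV. norm (x$w))"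
    unfolding norm_vec_def by (rule L2_set_le_sum) simp
  also have "\<dots> \<le> (\<Sum>w\<in>UNIV. \<Sum>m\<in>UNIV. \<bar>x$w$m\<bar>)"
    by (rule sum_mono) (rule norm_le_l1_cart)
  finally show ?thesis .
qed

lemma stat_bounded:
  assumes "\<forall>\<sigma>\<in>S. stat_experiment (\<sigma>::real^'m::finite^'w::finite)"
  shows "bounded S"
proof -
  have "norm \<sigma> \<le> real CARD('w)" if "\<sigma> \<in> S" for \<sigma>
  proof -
    have "norm \<sigma> \<le> (\<Sum>w\<in>UNIV. \<Sum>m\<in>UNIV. \<bar>\<sigma>$w$m\<bar>)" by (rule norm_nested_le)
    also have "\<dots> = (\<Sum>w\<in>(UNIV::'w set). 1)"
    proof (rule sum.cong[OF refl])
      fix w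
      have d: "is_dist (\<sigma>$w)" using assms that unfolding stat_experiment_def by blast
      then show "(\<Sum>m\<in>UNIV. \<bar>\<sigma>$w$m\<bar>) = 1" unfolding is_dist_def by simp
    qed
    finally show ?thesis by simp
  qed
  then show ?thesis unfolding bounded_iff by blast
qed

definition compose :: "real^'a^'m \<Rightarrow> real^'b^'a \<Rightarrow> real^'b^'m" where
  "compose \<tau> \<tau>' = (\<chi> m b. \<Sum>a\<in>UNIV. \<tau>$m$a * \<tau>'$a$b)"

lemma util_p_canon:
  fixes \<sigma> :: "real^'m::finite^'w::finite" and \<tau> :: "real^'a::finite^'m"
    and \<tau>' :: "real^'b::finite^'a"
  shows "util_p u p (canon \<sigma> \<tau>) \<tau>' = util_p u p \<sigma> (compose \<tau> \<tau>')"
proof -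
  have "util_p u p (canon \<sigma> \<tau>) \<tau>' =
    (\<Sum>w\<in>UNIV. \<Sum>a\<in>UNIV. \<Sum>b\<in>UNIV. \<Sum>m\<in>UNIV. p $ w * \<sigma> $ w $ m * \<tau> $ m $ a * \<tau>' $ a $ b * u b w)"
    unfolding util_p_def canon_def
    by (simp add: sum_distrib_left sum_distrib_right mult.assoc)
  also have "\<dots> = (\<Sum>w\<in>UNIV. \<Sum>m\<in>UNIV. \<Sum>b\<in>UNIV. \<Sum>a\<in>UNIV. p $ w * \<sigma> $ w $ m * \<tau> $ m $ a * \<tau>' $ a $ b * u b w)"
  proof (rule sum.cong[OF refl])
    fix w
    show "(\<Sum>a\<in>UNIV. \<Sum>b\<in>UNIV. \<Sum>m\<in>UNIV. p $ w * \<sigma> $ w $ m * \<tau> $ m $ a * \<tau>' $ a $ b * u b w) =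
      (\<Sum>m\<in>UNIV. \<Sum>b\<in>UNIV. \<Sum>a\<in>UNIV. p $ w * \<sigma> $ w $ m * \<tau> $ m $ a * \<tau>' $ a $ b * u b w)"
      apply (subst sum.swap)
      apply (subst (2) sum.swap)
      apply (rule sum.cong[OF refl])
      apply (subst sum.swap) ..
  qed
  also have "\<dots> = util_p u p \<sigma> (compose \<tau> \<tau>')"
    unfolding util_p_def compose_def
    by (simp add: sum_distrib_left sum_distrib_right mult.assoc)
  finally show ?thesis .
qed

lemma compose_obedient: "compose \<tau> obedient = (\<tau>::real^'a::finite^'m::finite)"
  unfolding compose_def obedient_def
  by (simp add: vec_eq_iff if_distrib cong: if_cong)

lemma compose_strategy:
  assumes "strategy (\<tau>::real^'a::finite^'m::finite)" "strategy (\<tau>'::real^'b::finite^'a)"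
  shows "strategy (compose \<tau> \<tau>')"
  unfolding strategy_def is_dist_def
proof (intro allI conjI)
  fix m i
  show "0 \<le> compose \<tau> \<tau>' $ m $ i"
    using assms unfolding compose_def strategy_def is_dist_def
    by (simp add: sum_nonneg)
next
  fix m
  have "(\<Sum>i\<in>UNIV. compose \<tau> \<tau>' $ m $ i) = (\<Sum>a\<in>UNIV. \<tau>$m$a * (\<Sum>i\<in>UNIV. \<tau>'$a$i))"
    unfolding compose_def by (simp add: sum_distrib_left, rule sum.swap)
  also have "\<dots> = 1" using assms unfolding strategy_def is_dist_def by simp
  finally show "(\<Sum>i\<in>UNIV. compose \<tau> \<tau>' $ m $ i) = 1" .
qed

lemma obedient_strategy: "strategy (obedient :: real^'a::finite^'a)"
  unfolding strategy_def is_dist_def obedient_def by simp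

lemma util_canon:
  "util P u (canon \<sigma> \<tau>) \<tau>' = util P u \<sigma> (compose \<tau> \<tau>')"
  unfolding util_def by (simp add: util_p_canon)

lemma Util_canon:
  "Util P u ((\<lambda>\<sigma>. canon \<sigma> \<tau>) ` S) \<tau>' = Util P u S (compose \<tau> \<tau>')"
  unfolding Util_def image_image by (simp add: util_canon)

lemma linear_canon: "linear (\<lambda>\<sigma>. canon \<sigma> \<tau>)"
  by (rule linearI) (simp_all add: canon_def vec_eq_iff sum.distrib sum_distrib_left distrib_right mult.assoc)

theorem lemma1:
  fixes P :: "(real^'w::finite) set"
    and us ur :: "'a::finite \<Rightarrow> 'w \<Rightarrow> real"
    and S :: "(real^'m::finite^'w) set"
    and \<tau> :: "real^'a^'m"
  assumes "prior_set P"
    and "ambiguous_experiment S"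
    and "\<tau> \<in> BR_amb P ur S"
  shows "ambiguous_experiment ((\<lambda>\<sigma>. canon \<sigma> \<tau>) ` S)
     \<and> obedient \<in> BR_amb P ur ((\<lambda>\<sigma>. canon \<sigma> \<tau>) ` S)
     \<and> (\<forall>\<sigma>\<in>S. util P us \<sigma> \<tau> = util P us (canon \<sigma> \<tau>) obedient
              \<and> util P ur \<sigma> \<tau> = util P ur (canon \<sigma> \<tau>) obedient)"
proof (intro conjI)
  have S: "S \<noteq> {}" "closed S" "convex S" "\<forall>\<sigma>\<in>S. stat_experiment \<sigma>"
    using assms(2) unfolding ambiguous_experiment_def by auto
  have tau: "strategy \<tau>" and br: "\<And>\<tau>'. strategy \<tau>' \<Longrightarrow> Util P ur S \<tau>' \<le> Util P ur S \<tau>"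
    using assms(3) unfolding BR_amb_def by auto
  have bl: "bounded_linear (\<lambda>\<sigma>. canon \<sigma> \<tau>)"
    using linear_canon linear_conv_bounded_linear by blast
  have "compact S" using S stat_bounded compact_eq_bounded_closed by blast
  then have "compact ((\<lambda>\<sigma>. canon \<sigma> \<tau>) ` S)"
    by (intro compact_continuous_image linear_continuous_on bl)
  then have cl: "closed ((\<lambda>\<sigma>. canon \<sigma> \<tau>) ` S)" by (rule compact_imp_closed)
  have cv: "convex ((\<lambda>\<sigma>. canon \<sigma> \<tau>) ` S)"
    by (rule convex_linear_image[OF linear_canon S(3)])
  have st: "stat_experiment (canon \<sigma> \<tau>)" if "\<sigma> \<in> S" for \<sigma>
  proof -
    have "strategy (compose \<sigma> \<tau>)"
      using compose_strategy[OF _ tau] S(4) that unfolding stat_experiment_def strategy_def by blast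
    moreover have "compose \<sigma> \<tau> = canon \<sigma> \<tau>" unfolding compose_def canon_def ..
    ultimately show ?thesis unfolding strategy_def stat_experiment_def by simp
  qed
  show "ambiguous_experiment ((\<lambda>\<sigma>. canon \<sigma> \<tau>) ` S)"
    unfolding ambiguous_experiment_def using S(1) cl cv st by blast
  show "obedient \<in> BR_amb P ur ((\<lambda>\<sigma>. canon \<sigma> \<tau>) ` S)"
    unfolding BR_amb_def
  proof (intro CollectI conjI allI impI obedient_strategy)
    fix \<tau>' :: "real^'a^'a"
    assume "strategy \<tau>'"
    then have "Util P ur S (compose \<tau> \<tau>') \<le> Util P ur S \<tau>"
      by (intro br compose_strategy tau)
    then show "Util P ur ((\<lambda>\<sigma>. canon \<sigma> \<tau>) ` S) \<tau>' \<le> Util P ur ((\<lambda>\<sigma>. canon \<sigma> \<tau>) ` S) obedient"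
      by (simp add: Util_canon compose_obedient)
  qed
  show "\<forall>\<sigma>\<in>S. util P us \<sigma> \<tau> = util P us (canon \<sigma> \<tau>) obedient
              \<and> util P ur \<sigma> \<tau> = util P ur (canon \<sigma> \<tau>) obedient"
    by (simp add: util_canon compose_obedient)
qed

end
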